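(* Let $\mathcal{D}=(V,\Phi)$ be a finite directed graph with adjacency matrix $M\in\{0,1\}^{V\times V}$ ($M_{vw}=1$ iff $(v,w)\in\Phi$). Let $\boldsymbol{\alpha}(t),\boldsymbol{\beta}(t)\in[0,+\infty)^V$ ($t\ge0$) be vector sequences such that $\boldsymbol{\alpha}(t)$ is non-decreasing in every component and $\boldsymbol{\beta}(t)$ is convergent, and let $\mathbf{r},\mathbf{s}\in(0,+\infty)^V$ with $r_v=s_v^{-1}$ for all $v$. Set $W_{vw}=r_vM_{vw}s_w$. Define $\boldsymbol{\omega}(t),\boldsymbol{\eta}(t)$ by $\boldsymbol{\omega}(0)=\boldsymbol{\eta}(0)=\mathbf{1}$ and, for all $v\in V$, $t\ge0$, $$\omega_v(t+1)=\frac{1}{1+\alpha_v(t)+\sum_{w}W_{vw}(1-\omega_w(t))},\qquad \eta_v(t+1)=1+\beta_v(t)+\sum_w M_{vw}\,\omega_w(t)\,\eta_w(t).$$ Assume that for every node $v$ belonging to a non-trivial strongly connected component of $\mathcal{D}$ there exists a node $w$ reachable from $v$ such that the sequence $\alpha_w(t)$ is not identically zero. Then $\boldsymbol{\eta}(t)$ converges, and $\boldsymbol{\omega}(t)$ converges and is non-increasing in every component. Moreover, $\lim_{t\to\infty}\omega_v(t)<1$ for every node $v$ such that there exists $w$ reachable from $v$ with $\alpha_w(t)$ not identically zero.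
   Context: A path from $v$ to $w$ of length $l\ge0$ is a list $(u_0,\dots,u_l)$ with $u_0=v$, $u_l=w$, $(u_{i-1},u_i)\in\Phi$; $w$ is reachable from $v$ if such a path exists for some $l\ge0$. A strongly connected component of $\mathcal{D}$ is a maximal induced subdigraph $\mathcal{D}[U]$ in which every node is reachable from every other node; it is trivial if it consists of a single node without a self-loop, and non-trivial otherwise. *)

theory Defs
  imports Complex_Main
begin

definition adj :: "('a \<times> 'a) set \<Rightarrow> 'a \<Rightarrow> 'a \<Rightarrow> real" where
  "adj Phi v w = (if (v, w) \<in> Phi then 1 else 0)"

definition reachable :: "('a \<times> 'a) set \<Rightarrow> 'a \<Rightarrow> 'a \<Rightarrow> bool" where
  "reachable Phi v w \<longleftrightarrow> (v, w) \<in> Phi\<^sup>*"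

definition scc_of :: "'a set \<Rightarrow> ('a \<times> 'a) set \<Rightarrow> 'a \<Rightarrow> 'a set" where
  "scc_of V Phi v = {w \<in> V. reachable Phi v w \<and> reachable Phi w v}"

definition in_nontrivial_scc :: "'a set \<Rightarrow> ('a \<times> 'a) set \<Rightarrow> 'a \<Rightarrow> bool" where
  "in_nontrivial_scc V Phi v \<longleftrightarrow>
     \<not> (\<exists>u. scc_of V Phi v = {u} \<and> (u, u) \<notin> Phi)"

primrec omega_seq :: "'a set \<Rightarrow> ('a \<Rightarrow> 'a \<Rightarrow> real) \<Rightarrow> (nat \<Rightarrow> 'a \<Rightarrow> real)
                        \<Rightarrow> nat \<Rightarrow> 'a \<Rightarrow> real" where
  "omega_seq V W alpha 0 = (\<lambda>v. 1)"
| "omega_seq V W alpha (Suc t) = (\<lambda>v. 1 / (1 + alpha t v +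
      (\<Sum>w\<in>V. W v w * (1 - omega_seq V W alpha t w))))"

primrec eta_seq :: "'a set \<Rightarrow> ('a \<Rightarrow> 'a \<Rightarrow> real) \<Rightarrow> (nat \<Rightarrow> 'a \<Rightarrow> real)
                      \<Rightarrow> (nat \<Rightarrow> 'a \<Rightarrow> real) \<Rightarrow> nat \<Rightarrow> 'a \<Rightarrow> real" where
  "eta_seq V M omega beta 0 = (\<lambda>v. 1)"
| "eta_seq V M omega beta (Suc t) = (\<lambda>v. 1 + beta t v +
      (\<Sum>w\<in>V. M v w * omega t w * eta_seq V M omega beta t w))"

end

theory Submission
  imports Defs
begin


lemma scalar_to_zero:
  fixes a d :: "nat \<Rightarrow> real"
  assumes anz: "\<And>t. a t \<ge> 0" and rec: "\<And>t. t \<ge> T \<Longrightarrow> a (Suc t) \<le> d t + q * a t"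
    and dz: "d \<longlonglongrightarrow> 0" and q0: "0 \<le> q" and q1: "q < 1"
  shows "a \<longlonglongrightarrow> 0"
proof (rule LIMSEQ_I)
  fix e :: real assume e: "0 < e"
  have "e * (1 - q) / 2 > 0" using e q1 by simp
  from LIMSEQ_D[OF dz this] obtain N0 where N0: "\<And>n. n \<ge> N0 \<Longrightarrow> norm (d n) < e * (1 - q) / 2"
    by auto
  define N1 where "N1 = max T N0"
  have bound: "a (N1 + k) \<le> q ^ k * a N1 + e / 2" for k
  proof (induction k)
    case 0 then show ?case using e by simp
  next
    case (Suc k)
    have "N1 + k \<ge> T" "N1 + k \<ge> N0" by (auto simp: N1_def)
    then have "a (N1 + Suc k) \<le> d (N1 + k) + q * a (N1 + k)" "d (N1 + k) < e * (1 - q) / 2"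
      using rec N0[of "N1+k"] abs_ge_self[of "d (N1+k)"] by auto
    moreover have "q * a (N1 + k) \<le> q * (q ^ k * a N1 + e / 2)"
      using Suc q0 by (simp add: mult_left_mono)
    ultimately have "a (N1 + Suc k) \<le> e * (1 - q) / 2 + q * (q ^ k * a N1 + e / 2)" by linarith
    also have "\<dots> = q ^ Suc k * a N1 + e / 2" by (simp add: field_simps)
    finally show ?case .
  qed
  have "(\<lambda>k. q ^ k * a N1) \<longlonglongrightarrow> 0 * a N1"
    by (intro tendsto_mult LIMSEQ_power_zero tendsto_const) (use q0 q1 in simp)
  then have "(\<lambda>k. q ^ k * a N1) \<longlonglongrightarrow> 0" by simp
  from LIMSEQ_D[OF this, of "e/2"] e obtain N2 where N2: "\<And>k. k \<ge> N2 \<Longrightarrow> norm (q ^ k * a N1) < e/2"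
    by auto
  show "\<exists>no. \<forall>n\<ge>no. norm (a n - 0) < e"
  proof (intro exI allI impI)
    fix n assume n: "n \<ge> N1 + N2"
    define k where "k = n - N1"
    have k: "n = N1 + k" "k \<ge> N2" using n unfolding k_def by auto
    have "a n \<le> q ^ k * a N1 + e / 2" using bound k by simp
    moreover have "q ^ k * a N1 < e/2" using N2[OF k(2)] by simp
    ultimately show "norm (a n - 0) < e" using anz[of n] by simp
  qed
qed

lemma rtrancl_exit: "(x, p) \<in> R\<^sup>* \<Longrightarrow> p \<in> P \<Longrightarrow> x \<notin> P \<Longrightarrow> \<exists>a b. (a, b) \<in> R \<and> a \<notin> P \<and> b \<in> P"
  by (induction rule: converse_rtrancl_induct) auto

lemma strictify:
  fixes S :: "'a set" and B :: "'a \<Rightarrow> 'a \<Rightarrow> real"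
  assumes fin: "finite S" and Bnn: "\<And>v w. v \<in> S \<Longrightarrow> w \<in> S \<Longrightarrow> B v w \<ge> 0"
  shows "card {v\<in>S. \<not> (\<Sum>w\<in>S. B v w * z w) < z v} = n \<Longrightarrow> (\<forall>v\<in>S. z v > 0) \<Longrightarrow>
     (\<forall>v\<in>S. (\<Sum>w\<in>S. B v w * z w) \<le> z v) \<Longrightarrow>
     (\<forall>v\<in>S. \<exists>p\<in>S. (\<Sum>w\<in>S. B p w * z w) < z p \<and> (v, p) \<in> {(a, b). a \<in> S \<and> b \<in> S \<and> B a b > 0}\<^sup>*) \<Longrightarrow>
     \<exists>y. (\<forall>v\<in>S. y v > 0) \<and> (\<forall>v\<in>S. (\<Sum>w\<in>S. B v w * y w) < y v)"
proof (induction n arbitrary: z rule: less_induct)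
  case (less n z)
  define E where "E = {(a, b). a \<in> S \<and> b \<in> S \<and> B a b > 0}"
  define P where "P = {v\<in>S. (\<Sum>w\<in>S. B v w * z w) < z v}"
  have zpos: "\<And>v. v \<in> S \<Longrightarrow> z v > 0" using less.prems by auto
  have zle: "\<And>v. v \<in> S \<Longrightarrow> (\<Sum>w\<in>S. B v w * z w) \<le> z v" using less.prems by auto
  have reach: "\<And>v. v \<in> S \<Longrightarrow> \<exists>p\<in>P. (v, p) \<in> E\<^sup>*" using less.prems(4) unfolding P_def E_def by blast
  show ?case
  proof (cases "{v\<in>S. \<not> (\<Sum>w\<in>S. B v w * z w) < z v} = {}")
    case True
    have "\<forall>v\<in>S. (\<Sum>w\<in>S. B v w * z w) < z v"
    proof
      fix v assume "v \<in> S"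
      show "(\<Sum>w\<in>S. B v w * z w) < z v"
      proof (rule ccontr)
        assume "\<not> (\<Sum>w\<in>S. B v w * z w) < z v"
        then have "v \<in> {v\<in>S. \<not> (\<Sum>w\<in>S. B v w * z w) < z v}" using \<open>v \<in> S\<close> by simp
        then show False using True by simp
      qed
    qed
    then show ?thesis using zpos by blast
  next
    case False
    then obtain x where x: "x \<in> S" "x \<notin> P" unfolding P_def by auto
    from reach[OF x(1)] obtain p where "p \<in> P" "(x, p) \<in> E\<^sup>*" by auto
    from rtrancl_exit[OF this(2) this(1) x(2)] obtain v u where vu: "(v, u) \<in> E" "v \<notin> P" "u \<in> P"
      by auto
    have vS: "v \<in> S" and uS: "u \<in> S" and Bvu: "B v u > 0" using vu(1) unfolding E_def by auto
    define g where "g w = z w - (\<Sum>w'\<in>S. B w w' * z w')" for w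
    define eps where "eps = Min (insert (1/2) ((\<lambda>w. g w / (2 * z w)) ` P))"
    have finP: "finite P" using fin unfolding P_def by auto
    have gpos: "\<And>w. w \<in> P \<Longrightarrow> g w > 0" unfolding g_def P_def by auto
    have eps_pos: "eps > 0" unfolding eps_def using finP gpos zpos
      by (subst Min_gr_iff) (auto simp: P_def)
    have eps_half: "eps \<le> 1/2" unfolding eps_def using finP by (intro Min_le) auto
    have eps_le: "\<And>w. w \<in> P \<Longrightarrow> eps \<le> g w / (2 * z w)" unfolding eps_def using finP by (intro Min_le) auto
    define z' where "z' w = (if w \<in> P then (1 - eps) * z w else z w)" for w
    have z'pos: "\<forall>w\<in>S. z' w > 0" using zpos eps_half unfolding z'_def by auto
    have z'le: "\<And>w. w \<in> S \<Longrightarrow> z' w \<le> z w" using zpos eps_pos unfolding z'_def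
      by (auto simp: algebra_simps intro: less_imp_le)
    have sum_le: "(\<Sum>w'\<in>S. B w w' * z' w') \<le> (\<Sum>w'\<in>S. B w w' * z w')" if "w \<in> S" for w
      using that Bnn z'le by (intro sum_mono mult_left_mono) auto
    have strictP: "(\<Sum>w'\<in>S. B w w' * z' w') < z' w" if "w \<in> P" for w
    proof -
      have wS: "w \<in> S" using that P_def by auto
      have "eps * z w \<le> g w / 2"
        using eps_le[OF that] zpos[OF wS] by (simp add: field_simps)
      then have "eps * z w < g w" using gpos[OF that] by linarith
      then have "(\<Sum>w'\<in>S. B w w' * z w') < (1 - eps) * z w" unfolding g_def by (simp add: algebra_simps)
      then show ?thesis using sum_le[OF wS] that unfolding z'_def by simp
    qed
    have strictv: "(\<Sum>w'\<in>S. B v w' * z' w') < z' v"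
    proof -
      have "(\<Sum>w'\<in>S. B v w' * z' w') < (\<Sum>w'\<in>S. B v w' * z w')"
      proof (rule sum_strict_mono_ex1[OF fin])
        show "\<forall>x\<in>S. B v x * z' x \<le> B v x * z x" using vS Bnn z'le by (auto intro: mult_left_mono)
        have "z' u < z u" using vu(3) zpos[OF uS] eps_pos unfolding z'_def by simp
        then show "\<exists>a\<in>S. B v a * z' a < B v a * z a" using uS Bvu by (intro bexI[of _ u]) auto
      qed
      also have "\<dots> \<le> z v" using zle[OF vS] .
      finally show ?thesis unfolding z'_def using vu(2) by simp
    qed
    have z'le2: "\<forall>w\<in>S. (\<Sum>w'\<in>S. B w w' * z' w') \<le> z' w"
    proof
      fix w assume wS: "w \<in> S"
      show "(\<Sum>w'\<in>S. B w w' * z' w') \<le> z' w"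
      proof (cases "w \<in> P")
        case True then show ?thesis using strictP by (simp add: less_imp_le)
      next
        case False then show ?thesis using sum_le[OF wS] zle[OF wS] unfolding z'_def by simp
      qed
    qed
    define N where "N = {v\<in>S. \<not> (\<Sum>w\<in>S. B v w * z w) < z v}"
    define N' where "N' = {v\<in>S. \<not> (\<Sum>w\<in>S. B v w * z' w) < z' v}"
    have "N' \<subseteq> N - {v}" unfolding N'_def N_def using strictP strictv P_def by auto
    moreover have "v \<in> N" unfolding N_def using vS vu(2) P_def by auto
    moreover have "finite N" unfolding N_def using fin by auto
    ultimately have "card N' < card N"
    proof -
      assume a: "N' \<subseteq> N - {v}" "v \<in> N" "finite N"
      have "card N' \<le> card (N - {v})" using a by (intro card_mono) auto
      also have "\<dots> < card N" using a by (intro card_Diff1_less)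
      finally show ?thesis .
    qed
    then have cardlt: "card N' < n" using less.prems(1) unfolding N_def by simp
    have reach': "\<forall>w\<in>S. \<exists>p\<in>S. (\<Sum>w'\<in>S. B p w' * z' w') < z' p \<and> (w, p) \<in> E\<^sup>*"
    proof
      fix w assume "w \<in> S"
      from reach[OF this] obtain p where "p \<in> P" "(w, p) \<in> E\<^sup>*" by blast
      moreover have "p \<in> S" using \<open>p \<in> P\<close> P_def by simp
      ultimately show "\<exists>p\<in>S. (\<Sum>w'\<in>S. B p w' * z' w') < z' p \<and> (w, p) \<in> E\<^sup>*"
        using strictP by blast
    qed
    have reach'': "\<forall>w\<in>S. \<exists>p\<in>S. (\<Sum>w'\<in>S. B p w' * z' w') < z' p \<and> (w, p) \<in> {(a, b). a \<in> S \<and> b \<in> S \<and> B a b > 0}\<^sup>*"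
      using reach' unfolding E_def .
    show ?thesis
      by (rule less.IH[OF cardlt _ z'pos z'le2 reach'']) (simp add: N'_def)
  qed
qed



lemma lin_conv:
  fixes V :: "'a set" and c :: "nat \<Rightarrow> 'a \<Rightarrow> real" and cs :: "'a \<Rightarrow> real"
    and B :: "nat \<Rightarrow> 'a \<Rightarrow> 'a \<Rightarrow> real" and Bs :: "'a \<Rightarrow> 'a \<Rightarrow> real"
    and x :: "nat \<Rightarrow> 'a \<Rightarrow> real" and y :: "'a \<Rightarrow> real"
  assumes fin: "finite V"
    and rec: "\<And>t v. v \<in> V \<Longrightarrow> x (Suc t) v = c t v + (\<Sum>w\<in>V. B t v w * x t w)"
    and cconv: "\<And>v. v \<in> V \<Longrightarrow> (\<lambda>t. c t v) \<longlonglongrightarrow> cs v"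
    and cs_nn: "\<And>v. v \<in> V \<Longrightarrow> cs v \<ge> 0"
    and Bconv: "\<And>v w. v \<in> V \<Longrightarrow> w \<in> V \<Longrightarrow> (\<lambda>t. B t v w) \<longlonglongrightarrow> Bs v w"
    and B_nn: "\<And>t v w. v \<in> V \<Longrightarrow> w \<in> V \<Longrightarrow> B t v w \<ge> 0"
    and Bs_nn: "\<And>v w. v \<in> V \<Longrightarrow> w \<in> V \<Longrightarrow> Bs v w \<ge> 0"
    and ypos: "\<And>v. v \<in> V \<Longrightarrow> y v > 0"
    and strict: "\<And>v. v \<in> V \<Longrightarrow> (\<Sum>w\<in>V. Bs v w * y w) < y v"
  shows "\<forall>v\<in>V. convergent (\<lambda>t. x t v)"
proof -
  define q0 where "q0 = Max (insert 0 ((\<lambda>v. (\<Sum>w\<in>V. Bs v w * y w) / y v) ` V))"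
  have q0_nn: "q0 \<ge> 0" unfolding q0_def using fin by (intro Max_ge) auto
  have q0_lt: "q0 < 1" unfolding q0_def using fin strict ypos by (subst Max_less_iff) auto
  have Bsq0: "(\<Sum>w\<in>V. Bs v w * y w) \<le> q0 * y v" if "v \<in> V" for v
  proof -
    have "(\<Sum>w\<in>V. Bs v w * y w) / y v \<le> q0" unfolding q0_def using fin that by (intro Max_ge) auto
    then show ?thesis using ypos[OF that] by (simp add: divide_le_eq)
  qed
  define q where "q = (1 + q0) / 2"
  have q_nn: "q \<ge> 0" and q_lt: "q < 1" and q0q: "q0 < q" using q0_nn q0_lt unfolding q_def by auto
  have Bsq: "(\<Sum>w\<in>V. Bs v w * y w) \<le> q * y v" if "v \<in> V" for v
    using Bsq0[OF that] q0q ypos[OF that] by (smt (verit) mult_right_mono)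
  have ev: "eventually (\<lambda>t. \<forall>v\<in>V. (\<Sum>w\<in>V. B t v w * y w) < q * y v) sequentially"
  proof (rule eventually_ball_finite[OF fin], rule ballI)
    fix v assume v: "v \<in> V"
    have "(\<lambda>t. \<Sum>w\<in>V. B t v w * y w) \<longlonglongrightarrow> (\<Sum>w\<in>V. Bs v w * y w)"
      using v Bconv by (intro tendsto_sum tendsto_mult tendsto_const) auto
    moreover have "(\<Sum>w\<in>V. Bs v w * y w) < q * y v"
      using Bsq0[OF v] q0q ypos[OF v] by (smt (verit) mult_strict_right_mono)
    ultimately show "eventually (\<lambda>t. (\<Sum>w\<in>V. B t v w * y w) < q * y v) sequentially"
      by (rule order_tendstoD(2))
  qed
  then obtain T where T: "\<And>t v. t \<ge> T \<Longrightarrow> v \<in> V \<Longrightarrow> (\<Sum>w\<in>V. B t v w * y w) < q * y v"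
    unfolding eventually_sequentially by blast
  define F where "F = (\<lambda>f v. cs v + (\<Sum>w\<in>V. Bs v w * f w))"
  define u where "u k = (F ^^ k) (\<lambda>v. 0)" for k
  have u0: "u 0 = (\<lambda>v. 0)" unfolding u_def by simp
  have uS: "u (Suc k) v = cs v + (\<Sum>w\<in>V. Bs v w * u k w)" for k v
    unfolding u_def F_def by simp
  define Kc where "Kc = Max (insert 0 ((\<lambda>v. cs v / y v) ` V))"
  define K where "K = Kc / (1 - q)"
  have Kc_nn: "Kc \<ge> 0" unfolding Kc_def using fin by (intro Max_ge) auto
  have csK: "cs v \<le> Kc * y v" if "v \<in> V" for v
  proof -
    have "cs v / y v \<le> Kc" unfolding Kc_def using fin that by (intro Max_ge) auto
    then show ?thesis using ypos[OF that] by (simp add: divide_le_eq)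
  qed
  have K_nn: "K \<ge> 0" unfolding K_def using Kc_nn q_lt by simp
  have KK: "Kc + K * q = K" unfolding K_def using q_lt by (simp add: field_simps)
  have uprops: "\<forall>v\<in>V. 0 \<le> u k v \<and> u k v \<le> u (Suc k) v \<and> u k v \<le> K * y v" for k
  proof (induction k)
    case 0
    have "\<forall>v\<in>V. 0 \<le> K * y v" using K_nn ypos by (metis less_imp_le mult_nonneg_nonneg)
    then show ?case using cs_nn by (simp add: u0 uS)
  next
    case (Suc k)
    show ?case
    proof
      fix v assume v: "v \<in> V"
      have s1: "0 \<le> (\<Sum>w\<in>V. Bs v w * u k w)" using Suc v Bs_nn by (intro sum_nonneg) auto
      have s2: "(\<Sum>w\<in>V. Bs v w * u k w) \<le> (\<Sum>w\<in>V. Bs v w * u (Suc k) w)"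
        using Suc v Bs_nn by (intro sum_mono mult_left_mono) auto
      have "(\<Sum>w\<in>V. Bs v w * u k w) \<le> (\<Sum>w\<in>V. Bs v w * (K * y w))"
        using Suc v Bs_nn by (intro sum_mono mult_left_mono) auto
      also have "\<dots> = K * (\<Sum>w\<in>V. Bs v w * y w)" by (simp add: sum_distrib_left algebra_simps)
      also have "\<dots> \<le> K * (q * y v)" using Bsq[OF v] K_nn by (rule mult_left_mono)
      finally have s3: "(\<Sum>w\<in>V. Bs v w * u k w) \<le> K * q * y v" by simp
      have "cs v + (\<Sum>w\<in>V. Bs v w * u k w) \<le> Kc * y v + K * q * y v" using csK[OF v] s3 by simp
      also have "\<dots> = (Kc + K * q) * y v" by (simp add: algebra_simps)
      also have "\<dots> = K * y v" using KK by simp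
      finally show "0 \<le> u (Suc k) v \<and> u (Suc k) v \<le> u (Suc (Suc k)) v \<and> u (Suc k) v \<le> K * y v"
        using s1 s2 cs_nn[OF v] by (simp add: uS)
    qed
  qed
  have uconv: "\<exists>L. (\<lambda>k. u k v) \<longlonglongrightarrow> L" if v: "v \<in> V" for v
  proof -
    have "incseq (\<lambda>k. u k v)" using uprops v by (intro incseq_SucI) auto
    moreover have "\<forall>k. u k v \<le> K * y v" using uprops v by auto
    ultimately obtain L where "(\<lambda>k. u k v) \<longlonglongrightarrow> L" by (rule incseq_convergent)
    then show ?thesis by blast
  qed
  define xs where "xs v = lim (\<lambda>k. u k v)" for v
  have xs_lim: "(\<lambda>k. u k v) \<longlonglongrightarrow> xs v" if "v \<in> V" for v
    using uconv[OF that] unfolding xs_def by (auto simp: convergent_LIMSEQ_iff[symmetric] convergent_def)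
  have xs_fix: "xs v = cs v + (\<Sum>w\<in>V. Bs v w * xs w)" if v: "v \<in> V" for v
  proof -
    have "(\<lambda>k. u (Suc k) v) \<longlonglongrightarrow> xs v" using xs_lim[OF v] by (rule LIMSEQ_Suc)
    moreover have "(\<lambda>k. u (Suc k) v) \<longlonglongrightarrow> cs v + (\<Sum>w\<in>V. Bs v w * xs w)"
      unfolding uS using xs_lim by (intro tendsto_add tendsto_sum tendsto_mult tendsto_const) auto
    ultimately show ?thesis by (rule LIMSEQ_unique)
  qed
  define e where "e t v = x t v - xs v" for t v
  define a where "a t = Max (insert 0 ((\<lambda>v. \<bar>e t v\<bar> / y v) ` V))" for t
  define dv where "dv t v = \<bar>c t v - cs v\<bar> + (\<Sum>w\<in>V. \<bar>B t v w - Bs v w\<bar> * \<bar>xs w\<bar>)" for t v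
  define d where "d t = (\<Sum>v\<in>V. dv t v / y v)" for t
  have a_nn: "a t \<ge> 0" for t unfolding a_def using fin by (intro Max_ge) auto
  have ea: "\<bar>e t v\<bar> \<le> a t * y v" if "v \<in> V" for t v
  proof -
    have "\<bar>e t v\<bar> / y v \<le> a t" unfolding a_def using fin that by (intro Max_ge) auto
    then show ?thesis using ypos[OF that] by (simp add: divide_le_eq)
  qed
  have dv_nn: "dv t v \<ge> 0" for t v unfolding dv_def by (intro add_nonneg_nonneg sum_nonneg) auto
  have d_ge: "dv t v / y v \<le> d t" if "v \<in> V" for t v
    unfolding d_def using fin that dv_nn ypos by (intro member_le_sum) (auto intro!: divide_nonneg_pos)
  have dz: "d \<longlonglongrightarrow> 0"
  proof -
    have "(\<lambda>t. d t) \<longlonglongrightarrow> (\<Sum>v\<in>V. (\<bar>cs v - cs v\<bar> + (\<Sum>w\<in>V. \<bar>Bs v w - Bs v w\<bar> * \<bar>xs w\<bar>)) / y v)"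
      unfolding d_def dv_def using cconv Bconv
      by (intro tendsto_sum tendsto_divide tendsto_add tendsto_rabs tendsto_diff tendsto_mult tendsto_const)
        (auto dest: ypos)
    then show ?thesis by simp
  qed
  have arec: "a (Suc t) \<le> d t + q * a t" if t: "t \<ge> T" for t
  proof -
    have "\<bar>e (Suc t) v\<bar> / y v \<le> d t + q * a t" if v: "v \<in> V" for v
    proof -
      have "e (Suc t) v = (c t v - cs v) + (\<Sum>w\<in>V. (B t v w - Bs v w) * xs w) + (\<Sum>w\<in>V. B t v w * e t w)"
        unfolding e_def rec[OF v] xs_fix[OF v]
        by (simp add: algebra_simps sum_subtractf sum.distrib)
      then have "\<bar>e (Suc t) v\<bar> \<le> \<bar>c t v - cs v\<bar> + \<bar>\<Sum>w\<in>V. (B t v w - Bs v w) * xs w\<bar> + \<bar>\<Sum>w\<in>V. B t v w * e t w\<bar>"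
        by linarith
      also have "\<bar>\<Sum>w\<in>V. (B t v w - Bs v w) * xs w\<bar> \<le> (\<Sum>w\<in>V. \<bar>B t v w - Bs v w\<bar> * \<bar>xs w\<bar>)"
        by (rule order_trans[OF sum_abs]) (simp add: abs_mult)
      also have "\<bar>\<Sum>w\<in>V. B t v w * e t w\<bar> \<le> (\<Sum>w\<in>V. B t v w * (a t * y w))"
      proof (rule order_trans[OF sum_abs], rule sum_mono)
        fix w assume w: "w \<in> V"
        show "\<bar>B t v w * e t w\<bar> \<le> B t v w * (a t * y w)"
          using B_nn[OF v w] ea[OF w] by (simp add: abs_mult mult_left_mono)
      qed
      also have "(\<Sum>w\<in>V. B t v w * (a t * y w)) = a t * (\<Sum>w\<in>V. B t v w * y w)"
        by (simp add: sum_distrib_left algebra_simps)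
      also have "\<dots> \<le> a t * (q * y v)" using T[OF t v] a_nn by (simp add: mult_left_mono)
      finally have "\<bar>e (Suc t) v\<bar> \<le> dv t v + q * a t * y v" unfolding dv_def by (simp add: mult.commute mult.left_commute)
      then have "\<bar>e (Suc t) v\<bar> / y v \<le> (dv t v + q * a t * y v) / y v"
        using ypos[OF v] by (intro divide_right_mono) auto
      also have "\<dots> = dv t v / y v + q * a t" using ypos[OF v] by (simp add: add_divide_distrib)
      finally have "\<bar>e (Suc t) v\<bar> / y v \<le> dv t v / y v + q * a t" .
      then show ?thesis using d_ge[OF v, of t] by linarith
    qed
    moreover have "0 \<le> d t + q * a t"
      using d_ge dv_nn ypos a_nn q_nn unfolding d_def by (intro add_nonneg_nonneg sum_nonneg) (auto intro!: divide_nonneg_pos)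
    ultimately show ?thesis unfolding a_def using fin by (subst Max_le_iff) auto
  qed
  have az: "a \<longlonglongrightarrow> 0" by (rule scalar_to_zero[OF a_nn arec dz q_nn q_lt])
  show ?thesis
  proof
    fix v assume v: "v \<in> V"
    have "(\<lambda>t. a t * y v) \<longlonglongrightarrow> 0 * y v" by (intro tendsto_mult az tendsto_const)
    then have ay: "(\<lambda>t. a t * y v) \<longlonglongrightarrow> 0" by simp
    have "(\<lambda>t. - (a t * y v)) \<longlonglongrightarrow> - 0" by (intro tendsto_minus ay)
    then have ay': "(\<lambda>t. - (a t * y v)) \<longlonglongrightarrow> 0" by simp
    have "(\<lambda>t. e t v) \<longlonglongrightarrow> 0"
    proof (rule tendsto_sandwich[OF _ _ ay' ay])
      have "\<And>t. - (a t * y v) \<le> e t v \<and> e t v \<le> a t * y v" using ea[OF v] by (metis abs_le_iff minus_le_iff)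
      then show "\<forall>\<^sub>F n in sequentially. - (a n * y v) \<le> e n v" "\<forall>\<^sub>F n in sequentially. e n v \<le> a n * y v"
        by auto
    qed
    then have "(\<lambda>t. e t v + xs v) \<longlonglongrightarrow> 0 + xs v" by (intro tendsto_add tendsto_const)
    then have "(\<lambda>t. x t v) \<longlonglongrightarrow> xs v" unfolding e_def by simp
    then show "convergent (\<lambda>t. x t v)" unfolding convergent_def by blast
  qed
qed


theorem theorem2:
  fixes V :: "'a set" and Phi :: "('a \<times> 'a) set"
    and alpha beta :: "nat \<Rightarrow> 'a \<Rightarrow> real" and r s :: "'a \<Rightarrow> real"
  assumes finV: "finite V"
    and PhiV: "Phi \<subseteq> V \<times> V"
    and alpha_nonneg: "\<And>t v. v \<in> V \<Longrightarrow> alpha t v \<ge> 0"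
    and beta_nonneg: "\<And>t v. v \<in> V \<Longrightarrow> beta t v \<ge> 0"
    and alpha_mono: "\<And>v. v \<in> V \<Longrightarrow> incseq (\<lambda>t. alpha t v)"
    and beta_conv: "\<And>v. v \<in> V \<Longrightarrow> convergent (\<lambda>t. beta t v)"
    and r_pos: "\<And>v. v \<in> V \<Longrightarrow> r v > 0"
    and s_pos: "\<And>v. v \<in> V \<Longrightarrow> s v > 0"
    and rs: "\<And>v. v \<in> V \<Longrightarrow> r v = 1 / s v"
    and hyp: "\<And>v. v \<in> V \<Longrightarrow> in_nontrivial_scc V Phi v \<Longrightarrow>
               \<exists>w. reachable Phi v w \<and> (\<exists>t. alpha t w \<noteq> 0)"
  defines "\<omega> \<equiv> omega_seq V (\<lambda>v w. r v * adj Phi v w * s w) alpha"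
    and "\<eta> \<equiv> eta_seq V (adj Phi) (omega_seq V (\<lambda>v w. r v * adj Phi v w * s w) alpha) beta"
  shows "(\<forall>v\<in>V. convergent (\<lambda>t. \<eta> t v)) \<and>
         (\<forall>v\<in>V. convergent (\<lambda>t. \<omega> t v) \<and> decseq (\<lambda>t. \<omega> t v)) \<and>
         (\<forall>v\<in>V. (\<exists>w. reachable Phi v w \<and> (\<exists>t. alpha t w \<noteq> 0)) \<longrightarrow>
                 lim (\<lambda>t. \<omega> t v) < 1)"
proof -
  define W where "W v w = r v * adj Phi v w * s w" for v w
  define den where "den t v = 1 + alpha t v + (\<Sum>w\<in>V. W v w * (1 - \<omega> t w))" for t v
  have om0: "\<omega> 0 v = 1" for v by (simp add: \<omega>_def)
  have omS: "\<omega> (Suc t) v = 1 / den t v" for t v by (simp add: \<omega>_def den_def W_def)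
  have adj_nn: "adj Phi v w \<ge> 0" for v w by (simp add: adj_def)
  have adj_le: "adj Phi v w \<le> 1" for v w by (simp add: adj_def)
  have adj1: "(v, w) \<in> Phi \<Longrightarrow> adj Phi v w = 1" for v w by (simp add: adj_def)
  have adj0: "(v, w) \<notin> Phi \<Longrightarrow> adj Phi v w = 0" for v w by (simp add: adj_def)
  have W_nn: "v \<in> V \<Longrightarrow> w \<in> V \<Longrightarrow> W v w \<ge> 0" for v w
    unfolding W_def using r_pos s_pos adj_nn by (simp add: less_imp_le)
  have PhiV': "(v, w) \<in> Phi \<Longrightarrow> v \<in> V \<and> w \<in> V" for v w using PhiV by auto
  have ombd: "\<forall>v\<in>V. 0 < \<omega> t v \<and> \<omega> t v \<le> 1" for t
  proof (induction t)
    case 0 then show ?case by (simp add: om0)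
  next
    case (Suc t)
    show ?case
    proof
      fix v assume v: "v \<in> V"
      have "0 \<le> (\<Sum>w\<in>V. W v w * (1 - \<omega> t w))"
        using Suc W_nn v by (intro sum_nonneg mult_nonneg_nonneg) auto
      then have "den t v \<ge> 1" unfolding den_def using alpha_nonneg[OF v] by simp
      then show "0 < \<omega> (Suc t) v \<and> \<omega> (Suc t) v \<le> 1" by (simp add: omS)
    qed
  qed
  have den_ge: "den t v \<ge> 1 + alpha t v" if v: "v \<in> V" for t v
  proof -
    have "0 \<le> (\<Sum>w\<in>V. W v w * (1 - \<omega> t w))"
      using ombd W_nn v by (intro sum_nonneg mult_nonneg_nonneg) auto
    then show ?thesis unfolding den_def by simp
  qed
  have den_ge1: "den t v \<ge> 1" if v: "v \<in> V" for t v
    using den_ge[OF v, of t] alpha_nonneg[OF v, of t] by simp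
  have den_ge_term: "den t v \<ge> 1 + W v w * (1 - \<omega> t w)" if v: "v \<in> V" and w: "w \<in> V" for t v w
  proof -
    have "W v w * (1 - \<omega> t w) \<le> (\<Sum>w\<in>V. W v w * (1 - \<omega> t w))"
      using ombd W_nn v w finV by (intro member_le_sum mult_nonneg_nonneg) auto
    then show ?thesis unfolding den_def using alpha_nonneg[OF v, of t] by simp
  qed
  have ommono: "\<forall>v\<in>V. \<omega> (Suc t) v \<le> \<omega> t v" for t
  proof (induction t)
    case 0 then show ?case using ombd by (simp add: om0)
  next
    case (Suc t)
    show ?case
    proof
      fix v assume v: "v \<in> V"
      have "alpha t v \<le> alpha (Suc t) v" using alpha_mono[OF v] by (rule incseq_SucD)
      moreover have "(\<Sum>w\<in>V. W v w * (1 - \<omega> t w)) \<le> (\<Sum>w\<in>V. W v w * (1 - \<omega> (Suc t) w))"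
        using Suc W_nn v by (intro sum_mono mult_left_mono) auto
      ultimately have "den t v \<le> den (Suc t) v" unfolding den_def by simp
      then show "\<omega> (Suc (Suc t)) v \<le> \<omega> (Suc t) v"
        using den_ge1[OF v, of t] by (simp add: omS frac_le)
    qed
  qed
  have omdec: "decseq (\<lambda>t. \<omega> t v)" if "v \<in> V" for v
    using ommono that by (intro decseq_SucI) auto
  define L where "L v = lim (\<lambda>t. \<omega> t v)" for v
  have L_lim: "(\<lambda>t. \<omega> t v) \<longlonglongrightarrow> L v" if v: "v \<in> V" for v
  proof -
    have "\<forall>i. 0 \<le> \<omega> i v" using ombd v by (auto intro: less_imp_le)
    from decseq_convergent[OF omdec[OF v] this] obtain l where "(\<lambda>t. \<omega> t v) \<longlonglongrightarrow> l" by blast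
    then show ?thesis unfolding L_def by (auto simp: convergent_LIMSEQ_iff[symmetric] convergent_def)
  qed
  have L_le: "L v \<le> \<omega> t v" if v: "v \<in> V" for t v
    using decseq_ge[OF omdec[OF v] L_lim[OF v]] .
  have L_nn: "L v \<ge> 0" if v: "v \<in> V" for v
    using L_lim[OF v] by (rule LIMSEQ_le_const) (use ombd v in \<open>auto intro: less_imp_le\<close>)
  have L_le1: "L v \<le> 1" if v: "v \<in> V" for v
    using L_le[OF v, of 0] by (simp add: om0)
  define good where "good v \<longleftrightarrow> (\<exists>w. reachable Phi v w \<and> (\<exists>t. alpha t w \<noteq> 0))" for v
  have goodL: "L v < 1" if v: "v \<in> V" and g: "good v" for v
  proof -
    from g obtain w t0 where vw: "(v, w) \<in> Phi\<^sup>*" and a0: "alpha t0 w \<noteq> 0"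
      unfolding good_def reachable_def by blast
    have "x \<in> V \<longrightarrow> L x < 1" if "(x, w) \<in> Phi\<^sup>*" for x
      using that
    proof (induction rule: converse_rtrancl_induct)
      case base
      show ?case
      proof
        assume w: "w \<in> V"
        have apos: "alpha t0 w > 0" using a0 alpha_nonneg[OF w, of t0] by simp
        have "L w \<le> \<omega> (Suc t0) w" by (rule L_le[OF w])
        also have "\<dots> = 1 / den t0 w" by (rule omS)
        also have "\<dots> \<le> 1 / (1 + alpha t0 w)"
          using den_ge[OF w, of t0] apos by (intro divide_left_mono) auto
        also have "\<dots> < 1" using apos by simp
        finally show "L w < 1" .
      qed
    next
      case (step x y)
      show ?case
      proof
        assume x: "x \<in> V"
        have y: "y \<in> V" using PhiV' step.hyps(1) by blast
        have "L y < 1" using step.IH y by blast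
        then have "eventually (\<lambda>t. \<omega> t y < 1) sequentially" using L_lim[OF y] by (rule order_tendstoD(2)[rotated])
        then obtain N where N: "\<omega> N y < 1" unfolding eventually_sequentially by blast
        have Wpos: "W x y > 0" unfolding W_def using adj1[OF step.hyps(1)] r_pos[OF x] s_pos[OF y] by simp
        have "den N x \<ge> 1 + W x y * (1 - \<omega> N y)" by (rule den_ge_term[OF x y])
        moreover have "W x y * (1 - \<omega> N y) > 0" using Wpos N by simp
        ultimately have dgt: "den N x > 1" by linarith
        have "L x \<le> \<omega> (Suc N) x" by (rule L_le[OF x])
        also have "\<dots> = 1 / den N x" by (rule omS)
        also have "\<dots> < 1" using dgt by simp
        finally show "L x < 1" .
      qed
    qed
    then show ?thesis using vw v by blast
  qed
  define A where "A v = 1 / L v - 1 - (\<Sum>w\<in>V. W v w * (1 - L w))" for v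
  have alpha_eq: "alpha t v = 1 / \<omega> (Suc t) v - 1 - (\<Sum>w\<in>V. W v w * (1 - \<omega> t w))" if v: "v \<in> V" for t v
  proof -
    have "den t v > 0" using den_ge1[OF v, of t] by simp
    then have "1 / \<omega> (Suc t) v = den t v" by (simp add: omS)
    then show ?thesis unfolding den_def by simp
  qed
  have alpha_lim: "(\<lambda>t. alpha t v) \<longlonglongrightarrow> A v" if v: "v \<in> V" and Lp: "L v > 0" for v
  proof -
    have "(\<lambda>t. 1 / \<omega> (Suc t) v - 1 - (\<Sum>w\<in>V. W v w * (1 - \<omega> t w))) \<longlonglongrightarrow> A v"
      unfolding A_def using L_lim Lp v
      by (intro tendsto_diff tendsto_divide tendsto_sum tendsto_mult tendsto_const LIMSEQ_Suc) auto
    then show ?thesis using alpha_eq[OF v] by simp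
  qed
  have alpha_le_A: "alpha t v \<le> A v" if v: "v \<in> V" and Lp: "L v > 0" for t v
    using incseq_le[OF alpha_mono[OF v] alpha_lim[OF v Lp]] .
  define z where "z v = s v * (1 / L v - 1)" for v
  have key: "(\<Sum>w\<in>V. adj Phi v w * s w * (1 - L w)) = z v - s v * A v" if v: "v \<in> V" for v
  proof -
    have "(\<Sum>w\<in>V. W v w * (1 - L w)) = r v * (\<Sum>w\<in>V. adj Phi v w * s w * (1 - L w))"
      unfolding W_def by (simp add: sum_distrib_left algebra_simps)
    moreover have "s v * r v = 1" using rs[OF v] s_pos[OF v] by simp
    ultimately have "s v * (\<Sum>w\<in>V. W v w * (1 - L w)) = (\<Sum>w\<in>V. adj Phi v w * s w * (1 - L w))"
      by (metis mult.assoc mult_1)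
    then show ?thesis unfolding z_def A_def by (simp add: algebra_simps)
  qed
  define Sg where "Sg = {v\<in>V. good v \<and> L v > 0}"
  define Y0 where "Y0 = {v\<in>V. good v \<and> L v = 0}"
  define Bd where "Bd = {v\<in>V. \<not> good v}"
  define Bs where "Bs v w = adj Phi v w * L w" for v w
  have SgV: "Sg \<subseteq> V" unfolding Sg_def by auto
  have finSg: "finite Sg" using finV SgV finite_subset by blast
  have Bs_nn: "v \<in> V \<Longrightarrow> w \<in> V \<Longrightarrow> Bs v w \<ge> 0" for v w unfolding Bs_def using adj_nn L_nn by simp
  have zpos: "z v > 0" if "v \<in> Sg" for v
  proof -
    have v: "v \<in> V" "good v" "L v > 0" using that Sg_def by auto
    have "L v < 1" using goodL v by blast
    then have "1 / L v > 1" using v(3) by simp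
    then show ?thesis unfolding z_def using s_pos[OF v(1)] by simp
  qed
  have Lz: "L w * z w = s w * (1 - L w)" if "w \<in> Sg" for w
    using that unfolding Sg_def z_def by (auto simp: field_simps)
  define f where "f v w = adj Phi v w * s w * (1 - L w)" for v w
  have f_nn: "v \<in> V \<Longrightarrow> w \<in> V \<Longrightarrow> f v w \<ge> 0" for v w
    unfolding f_def using adj_nn s_pos L_le1 by (simp add: less_imp_le)
  have rowSg: "(\<Sum>w\<in>Sg. Bs v w * z w) = (\<Sum>w\<in>Sg. f v w)" for v
    unfolding Bs_def f_def by (intro sum.cong refl) (simp add: mult.assoc Lz)
  have rowSg_le: "(\<Sum>w\<in>Sg. Bs v w * z w) \<le> z v - s v * A v" if v: "v \<in> V" for v
  proof -
    have "(\<Sum>w\<in>Sg. f v w) \<le> (\<Sum>w\<in>V. f v w)"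
      using finV SgV f_nn v by (intro sum_mono2) auto
    then show ?thesis using key[OF v] rowSg unfolding f_def by simp
  qed
  have sA_nn: "s v * A v \<ge> 0" if "v \<in> Sg" for v
  proof -
    have "v \<in> V" "L v > 0" using that Sg_def by auto
    then have "A v \<ge> alpha 0 v" by (rule alpha_le_A)
    then show ?thesis using alpha_nonneg[OF \<open>v \<in> V\<close>, of 0] s_pos[OF \<open>v \<in> V\<close>] by simp
  qed
  have strictA: "(\<Sum>w\<in>Sg. Bs v w * z w) < z v" if "v \<in> Sg" "alpha t v \<noteq> 0" for v t
  proof -
    have v: "v \<in> V" "L v > 0" using that Sg_def by auto
    have "A v \<ge> alpha t v" by (rule alpha_le_A[OF v])
    then have "A v > 0" using that(2) alpha_nonneg[OF v(1), of t] by simp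
    then have "s v * A v > 0" using s_pos[OF v(1)] by simp
    then show ?thesis using rowSg_le[OF v(1)] by simp
  qed
  have strictY: "(\<Sum>w\<in>Sg. Bs v w * z w) < z v" if "v \<in> Sg" "(v, y) \<in> Phi" "L y = 0" for v y
  proof -
    have v: "v \<in> V" using that Sg_def by auto
    have y: "y \<in> V" using PhiV' that(2) by blast
    have ySg: "y \<notin> Sg" using that(3) Sg_def by auto
    have "(\<Sum>w\<in>Sg. f v w) \<le> (\<Sum>w\<in>V - {y}. f v w)"
      using finV SgV f_nn v ySg by (intro sum_mono2) auto
    also have "\<dots> < f v y + (\<Sum>w\<in>V - {y}. f v w)"
      unfolding f_def using adj1[OF that(2)] s_pos[OF y] that(3) by simp
    also have "\<dots> = (\<Sum>w\<in>V. f v w)" using finV y by (simp add: sum.remove)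
    finally show ?thesis using key[OF v] rowSg[of v] sA_nn[OF that(1)] unfolding f_def by simp
  qed
  have reachP: "\<forall>v\<in>Sg. \<exists>p\<in>Sg. (\<Sum>w\<in>Sg. Bs p w * z w) < z p \<and>
      (v, p) \<in> {(a, b). a \<in> Sg \<and> b \<in> Sg \<and> Bs a b > 0}\<^sup>*"
  proof
    fix v assume vSg: "v \<in> Sg"
    then obtain w t0 where vw: "(v, w) \<in> Phi\<^sup>*" and a0: "alpha t0 w \<noteq> 0"
      unfolding Sg_def good_def reachable_def by blast
    have "x \<in> Sg \<longrightarrow> (\<exists>p\<in>Sg. (\<Sum>w\<in>Sg. Bs p w * z w) < z p \<and>
      (x, p) \<in> {(a, b). a \<in> Sg \<and> b \<in> Sg \<and> Bs a b > 0}\<^sup>*)" if "(x, w) \<in> Phi\<^sup>*" for x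
      using that
    proof (induction rule: converse_rtrancl_induct)
      case base
      show ?case using strictA[of w t0] a0 by blast
    next
      case (step x y)
      show ?case
      proof
        assume xSg: "x \<in> Sg"
        have y: "y \<in> V" using PhiV' step.hyps(1) by blast
        have gy: "good y" unfolding good_def reachable_def using step.hyps(2) a0 by blast
        show "\<exists>p\<in>Sg. (\<Sum>w\<in>Sg. Bs p w * z w) < z p \<and> (x, p) \<in> {(a, b). a \<in> Sg \<and> b \<in> Sg \<and> Bs a b > 0}\<^sup>*"
        proof (cases "L y > 0")
          case True
          then have ySg: "y \<in> Sg" using y gy Sg_def by auto
          then obtain p where p: "p \<in> Sg" "(\<Sum>w\<in>Sg. Bs p w * z w) < z p"
              "(y, p) \<in> {(a, b). a \<in> Sg \<and> b \<in> Sg \<and> Bs a b > 0}\<^sup>*" using step.IH by blast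
          have "(x, y) \<in> {(a, b). a \<in> Sg \<and> b \<in> Sg \<and> Bs a b > 0}"
            using xSg ySg True adj1[OF step.hyps(1)] unfolding Bs_def by simp
          then have "(x, p) \<in> {(a, b). a \<in> Sg \<and> b \<in> Sg \<and> Bs a b > 0}\<^sup>*"
            using p(3) by (rule converse_rtrancl_into_rtrancl)
          then show ?thesis using p by blast
        next
          case False
          then have "L y = 0" using L_nn[OF y] by simp
          then have "(\<Sum>w\<in>Sg. Bs x w * z w) < z x" using strictY[OF xSg step.hyps(1)] by blast
          then show ?thesis using xSg by blast
        qed
      qed
    qed
    then show "\<exists>p\<in>Sg. (\<Sum>w\<in>Sg. Bs p w * z w) < z p \<and> (v, p) \<in> {(a, b). a \<in> Sg \<and> b \<in> Sg \<and> Bs a b > 0}\<^sup>*"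
      using vw vSg by blast
  qed
  have zle: "\<forall>v\<in>Sg. (\<Sum>w\<in>Sg. Bs v w * z w) \<le> z v"
    using rowSg_le sA_nn SgV by (smt (verit) subsetD)
  obtain y1 where y1pos: "\<forall>v\<in>Sg. y1 v > 0" and y1strict: "\<forall>v\<in>Sg. (\<Sum>w\<in>Sg. Bs v w * y1 w) < y1 v"
    using strictify[OF finSg, of Bs z, OF _ refl] Bs_nn SgV zpos zle reachP by blast
  have bad_succ: "w \<in> Bd" if "v \<in> Bd" "(v, w) \<in> Phi" for v w
  proof -
    have w: "w \<in> V" using PhiV' that(2) by blast
    have "\<not> good w"
    proof
      assume "good w"
      then obtain u t where "(w, u) \<in> Phi\<^sup>*" "alpha t u \<noteq> 0" unfolding good_def reachable_def by blast
      moreover have "(v, w) \<in> Phi\<^sup>*" using that(2) by blast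
      ultimately have "good v" unfolding good_def reachable_def by (meson rtrancl_trans)
      then show False using that(1) Bd_def by auto
    qed
    then show ?thesis using w Bd_def by auto
  qed
  have bad_acyc: "(v, v) \<notin> Phi\<^sup>+" if vB: "v \<in> Bd" for v
  proof
    assume cyc: "(v, v) \<in> Phi\<^sup>+"
    have v: "v \<in> V" using vB Bd_def by auto
    have "in_nontrivial_scc V Phi v"
      unfolding in_nontrivial_scc_def
    proof
      assume "\<exists>u. scc_of V Phi v = {u} \<and> (u, u) \<notin> Phi"
      then obtain u where u: "scc_of V Phi v = {u}" "(u, u) \<notin> Phi" by blast
      have "v \<in> scc_of V Phi v" unfolding scc_of_def reachable_def using v by simp
      then have uv: "u = v" using u by simp
      from cyc obtain x where vx: "(v, x) \<in> Phi" and xv: "(x, v) \<in> Phi\<^sup>*"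
        by (meson tranclD)
      have "x \<in> V" using PhiV' vx by blast
      then have "x \<in> scc_of V Phi v" unfolding scc_of_def reachable_def using vx xv by auto
      then have "x = v" using u uv by simp
      then show False using vx u uv by simp
    qed
    then have "good v" using hyp[OF v] unfolding good_def by blast
    then show False using vB Bd_def by auto
  qed
  define h where "h v = card {w. (v, w) \<in> Phi\<^sup>+}" for v
  have tr_fin: "finite {w. (v, w) \<in> Phi\<^sup>+}" for v
  proof -
    have "Phi\<^sup>+ \<subseteq> V \<times> V" using PhiV by (rule trancl_subset_Sigma)
    then have "{w. (v, w) \<in> Phi\<^sup>+} \<subseteq> V" by blast
    then show ?thesis using finV finite_subset by blast
  qed
  have h_lt: "h w < h v" if vB: "v \<in> Bd" and vw: "(v, w) \<in> Phi" for v w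
  proof -
    have wB: "w \<in> Bd" by (rule bad_succ[OF vB vw])
    have "{u. (w, u) \<in> Phi\<^sup>+} \<subset> {u. (v, u) \<in> Phi\<^sup>+}"
    proof
      show "{u. (w, u) \<in> Phi\<^sup>+} \<subseteq> {u. (v, u) \<in> Phi\<^sup>+}"
        using vw by (auto intro: trancl_into_trancl2)
      have "w \<in> {u. (v, u) \<in> Phi\<^sup>+}" using vw by auto
      moreover have "w \<notin> {u. (w, u) \<in> Phi\<^sup>+}" using bad_acyc[OF wB] by simp
      ultimately show "{u. (w, u) \<in> Phi\<^sup>+} \<noteq> {u. (v, u) \<in> Phi\<^sup>+}" by blast
    qed
    then show ?thesis unfolding h_def using tr_fin by (rule psubset_card_mono[rotated])
  qed
  define Kb :: real where "Kb = 2 * (real (card V) + 1)"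
  have Kb1: "Kb \<ge> 1" unfolding Kb_def by simp
  define g where "g v = y1 v - (\<Sum>w\<in>Sg. Bs v w * y1 w)" for v
  define bs where "bs v = (\<Sum>w\<in>V. if w \<in> Bd then Bs v w * Kb ^ h w else 0)" for v
  define C where "C = 1 + Max (insert 0 ((\<lambda>v. bs v / g v) ` Sg))"
  have C1: "C \<ge> 1" unfolding C_def using finSg by (simp add: Max_ge)
  have gpos: "g v > 0" if "v \<in> Sg" for v using y1strict that g_def by auto
  have Cg: "bs v < C * g v" if v: "v \<in> Sg" for v
  proof -
    have "bs v / g v \<le> Max (insert 0 ((\<lambda>v. bs v / g v) ` Sg))" using finSg v by (intro Max_ge) auto
    then have "bs v / g v < C" unfolding C_def by simp
    then show ?thesis using gpos[OF v] by (simp add: divide_less_eq)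
  qed
  define y0 where "y0 w = (if w \<in> Sg then C * y1 w else if w \<in> Bd then Kb ^ h w else 0)" for w
  define yy where "yy w = (if w \<in> Y0 then 1 + (\<Sum>u\<in>V. Bs w u * y0 u) else y0 w)" for w
  have y0_nn: "y0 w \<ge> 0" for w unfolding y0_def using C1 y1pos Kb1 by (auto intro: less_imp_le)
  have disj: "Sg \<inter> Bd = {}" "Y0 \<inter> Bd = {}" "Sg \<inter> Y0 = {}" unfolding Sg_def Bd_def Y0_def by auto
  have part: "v \<in> Sg \<or> v \<in> Y0 \<or> v \<in> Bd" if "v \<in> V" for v
    using that L_nn[OF that] unfolding Sg_def Y0_def Bd_def by auto
  have sum_yy: "(\<Sum>w\<in>V. Bs v w * yy w) = (\<Sum>w\<in>V. Bs v w * y0 w)" for v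
    by (intro sum.cong refl) (auto simp: yy_def Bs_def Y0_def)
  have strict_all: "(\<Sum>w\<in>V. Bs v w * yy w) < yy v" if v: "v \<in> V" for v
  proof -
    consider "v \<in> Sg" | "v \<in> Y0" | "v \<in> Bd" using part[OF v] by blast
    then show ?thesis
    proof cases
      case 1
      have "Bs v w * y0 w = (if w \<in> Sg then C * (Bs v w * y1 w) else 0) +
          (if w \<in> Bd then Bs v w * Kb ^ h w else 0)" for w
        using disj unfolding y0_def by auto
      then have "(\<Sum>w\<in>V. Bs v w * y0 w) = (\<Sum>w\<in>V. if w \<in> Sg then C * (Bs v w * y1 w) else 0) + bs v"
        unfolding bs_def by (simp add: sum.distrib)
      also have "(\<Sum>w\<in>V. if w \<in> Sg then C * (Bs v w * y1 w) else 0) = (\<Sum>w\<in>Sg. C * (Bs v w * y1 w))"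
        using finV SgV by (simp add: sum.If_cases Int_absorb1)
      also have "\<dots> = C * (\<Sum>w\<in>Sg. Bs v w * y1 w)" by (simp add: sum_distrib_left)
      finally have "(\<Sum>w\<in>V. Bs v w * y0 w) = C * (\<Sum>w\<in>Sg. Bs v w * y1 w) + bs v" .
      also have "\<dots> < C * (\<Sum>w\<in>Sg. Bs v w * y1 w) + C * g v" using Cg[OF 1] by simp
      also have "\<dots> = C * y1 v" unfolding g_def by (simp add: algebra_simps)
      also have "\<dots> = yy v" using 1 disj unfolding yy_def y0_def by auto
      finally show ?thesis using sum_yy by simp
    next
      case 2
      then show ?thesis using sum_yy unfolding yy_def by simp
    next
      case 3
      have yyv: "yy v = Kb ^ h v" using 3 disj unfolding yy_def y0_def by auto
      have termb: "Bs v w * y0 w \<le> Kb ^ h v / Kb" if w: "w \<in> V" for w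
      proof (cases "(v, w) \<in> Phi")
        case True
        have wB: "w \<in> Bd" by (rule bad_succ[OF 3 True])
        have "Suc (h w) \<le> h v" using h_lt[OF 3 True] by simp
        then have "Kb ^ Suc (h w) \<le> Kb ^ h v" using Kb1 by (rule power_increasing)
        then have hk: "Kb ^ h w \<le> Kb ^ h v / Kb" using Kb1 by (simp add: field_simps)
        have "Bs v w * y0 w = L w * Kb ^ h w" using wB disj adj1[OF True] unfolding Bs_def y0_def by auto
        also have "\<dots> \<le> 1 * Kb ^ h w" using L_le1[OF w] Kb1 by (intro mult_right_mono) auto
        finally show ?thesis using hk by simp
      next
        case False
        then show ?thesis using adj0[OF False] Kb1 unfolding Bs_def by simp
      qed
      have "(\<Sum>w\<in>V. Bs v w * y0 w) \<le> (\<Sum>w\<in>V. Kb ^ h v / Kb)" using termb by (rule sum_mono)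
      also have "\<dots> = real (card V) * (Kb ^ h v / Kb)" by simp
      also have "\<dots> < Kb * (Kb ^ h v / Kb)"
        using Kb1 by (intro mult_strict_right_mono) (auto simp: Kb_def)
      also have "\<dots> = Kb ^ h v" using Kb1 by simp
      finally show ?thesis using sum_yy yyv by simp
    qed
  qed
  have yy_pos: "yy v > 0" if v: "v \<in> V" for v
  proof -
    consider "v \<in> Sg" | "v \<in> Y0" | "v \<in> Bd" using part[OF v] by blast
    then show ?thesis
    proof cases
      case 1 then show ?thesis using disj C1 y1pos unfolding yy_def y0_def by auto
    next
      case 2
      have "(\<Sum>u\<in>V. Bs v u * y0 u) \<ge> 0" using Bs_nn v y0_nn by (intro sum_nonneg mult_nonneg_nonneg) auto
      then show ?thesis using 2 unfolding yy_def by simp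
    next
      case 3 then show ?thesis using disj Kb1 unfolding yy_def y0_def by auto
    qed
  qed
  have eta_rec: "\<eta> (Suc t) v = (1 + beta t v) + (\<Sum>w\<in>V. (adj Phi v w * \<omega> t w) * \<eta> t w)" for t v
    by (simp add: \<eta>_def \<omega>_def)
  have eta_conv: "\<forall>v\<in>V. convergent (\<lambda>t. \<eta> t v)"
  proof (rule lin_conv[where c = "\<lambda>t v. 1 + beta t v" and cs = "\<lambda>v. 1 + lim (\<lambda>t. beta t v)"
        and B = "\<lambda>t v w. adj Phi v w * \<omega> t w" and Bs = Bs and y = yy, OF finV eta_rec])
    fix v assume v: "v \<in> V"
    have bl: "(\<lambda>t. beta t v) \<longlonglongrightarrow> lim (\<lambda>t. beta t v)"
      using beta_conv[OF v] by (simp add: convergent_LIMSEQ_iff)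
    then show "(\<lambda>t. 1 + beta t v) \<longlonglongrightarrow> 1 + lim (\<lambda>t. beta t v)" by (intro tendsto_add tendsto_const)
    have "lim (\<lambda>t. beta t v) \<ge> 0" using bl by (rule LIMSEQ_le_const) (use beta_nonneg v in auto)
    then show "1 + lim (\<lambda>t. beta t v) \<ge> 0" by simp
    show "yy v > 0" by (rule yy_pos[OF v])
    show "(\<Sum>w\<in>V. Bs v w * yy w) < yy v" by (rule strict_all[OF v])
  next
    fix v w assume v: "v \<in> V" and w: "w \<in> V"
    show "(\<lambda>t. adj Phi v w * \<omega> t w) \<longlonglongrightarrow> Bs v w"
      unfolding Bs_def by (intro tendsto_mult tendsto_const L_lim[OF w])
    show "Bs v w \<ge> 0" by (rule Bs_nn[OF v w])
  next
    fix t v w assume v: "v \<in> V" and w: "w \<in> V"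
    show "adj Phi v w * \<omega> t w \<ge> 0" using adj_nn[of v w] ombd[of t] w by (metis less_imp_le mult_nonneg_nonneg)
  qed
  show ?thesis
  proof (intro conjI)
    show "\<forall>v\<in>V. convergent (\<lambda>t. \<eta> t v)" by (rule eta_conv)
    show "\<forall>v\<in>V. convergent (\<lambda>t. \<omega> t v) \<and> decseq (\<lambda>t. \<omega> t v)"
      using L_lim omdec unfolding convergent_def by blast
    show "\<forall>v\<in>V. (\<exists>w. reachable Phi v w \<and> (\<exists>t. alpha t w \<noteq> 0)) \<longrightarrow> lim (\<lambda>t. \<omega> t v) < 1"
      using goodL unfolding good_def L_def by blast
  qed
qed

end
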